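(* Let $N\ge 1$ be an integer, let $\alpha$ be a real number with $1/N\le\alpha\le 1$, and let $P>0$. Define $$\mathcal{D}_1=\{\mathbf{x}\in\mathbb{C}^N : \|\mathbf{x}\|_2^2\le P\},\qquad \mathcal{D}_2=\{\mathbf{x}\in\mathbb{C}^N : |x_i|^2\le \alpha\|\mathbf{x}\|_2^2 \text{ for all } i=1,\dots,N\},$$ and $\mathcal{D}=\mathcal{D}_1\cap\mathcal{D}_2$. Let $\mathbf{z}\in\mathbb{C}^N$ and let $\mathbf{x}'$ be an orthogonal projection of $\mathbf{z}$ onto $\mathcal{D}_2$, i.e., $\mathbf{x}'\in\mathcal{D}_2$ and $\|\mathbf{z}-\mathbf{x}'\|_2\le\|\mathbf{z}-\mathbf{w}\|_2$ for all $\mathbf{w}\in\mathcal{D}_2$. Set $\mathbf{x}=\mathbf{x}'$ if $\mathbf{x}'=\mathbf{0}$, and otherwise $\mathbf{x}=\min\{1,\sqrt{P}/\|\mathbf{x}'\|_2\}\,\mathbf{x}'$ (the orthogonal projection of $\mathbf{x}'$ onto $\mathcal{D}_1$). Then $\mathbf{x}$ is an orthogonal projection of $\mathbf{z}$ onto $\mathcal{D}$, i.e., $\mathbf{x}\in\mathcal{D}$ and $\|\mathbf{z}-\mathbf{x}\|_2\le\|\mathbf{z}-\mathbf{w}\|_2$ for all $\mathbf{w}\in\mathcal{D}$.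
   Context: $\|\cdot\|_2$ is the Euclidean norm on $\mathbb{C}^N$. The set $\mathcal{D}_2$ is the set of vectors whose peak-to-average power ratio $N\|\mathbf{x}\|_\infty^2/\|\mathbf{x}\|_2^2$ is at most $\rho=\alpha N$ (together with $\mathbf{0}$), and $\mathcal{D}_1$ is a power (norm) constraint. *)

theory Defs
  imports "HOL-Analysis.Analysis"
begin

text \<open>Vectors in C^N are modelled as complex ^ 'n with N = CARD('n);
  norm is the Euclidean 2-norm.\<close>

definition D1 :: "real \<Rightarrow> (complex ^ 'n) set" where
  "D1 P = {x. (norm x)\<^sup>2 \<le> P}"

definition D2 :: "real \<Rightarrow> (complex ^ 'n) set" where
  "D2 \<alpha> = {x. \<forall>i. (cmod (x $ i))\<^sup>2 \<le> \<alpha> * (norm x)\<^sup>2}"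

definition is_proj :: "'a::real_normed_vector \<Rightarrow> 'a set \<Rightarrow> 'a \<Rightarrow> bool" where
  "is_proj z S x \<longleftrightarrow> x \<in> S \<and> (\<forall>w\<in>S. norm (z - x) \<le> norm (z - w))"

end

theory Submission
  imports Defs
begin

lemma D2_scale:
  fixes x :: "complex ^ 'n"
  assumes "x \<in> D2 a"
  shows "c *\<^sub>R x \<in> D2 a"
proof -
  have "(cmod ((c *\<^sub>R x) $ i))\<^sup>2 \<le> a * (norm (c *\<^sub>R x))\<^sup>2" for i
  proof -
    have h: "(cmod (x $ i))\<^sup>2 \<le> a * (norm x)\<^sup>2" using assms by (auto simp: D2_def)
    have "(cmod ((c *\<^sub>R x) $ i))\<^sup>2 = c\<^sup>2 * (cmod (x $ i))\<^sup>2"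
      by (simp add: power_mult_distrib)
    also have "\<dots> \<le> c\<^sup>2 * (a * (norm x)\<^sup>2)" using h by (simp add: mult_left_mono)
    also have "\<dots> = a * (norm (c *\<^sub>R x))\<^sup>2" by (simp add: power_mult_distrib)
    finally show ?thesis .
  qed
  then show ?thesis by (simp add: D2_def)
qed

lemma normdiff:
  fixes z w :: "'a::real_inner"
  shows "(norm (z - w))\<^sup>2 = (norm z)\<^sup>2 + (norm w)\<^sup>2 - 2 * inner z w"
  by (simp add: power2_norm_eq_inner inner_diff inner_commute)

theorem mainTheorem1:
  fixes z x' :: "complex ^ 'n" and \<alpha> P :: real
  assumes "1 / real CARD('n) \<le> \<alpha>" and "\<alpha> \<le> 1" and "P > 0"
    and "is_proj z (D2 \<alpha>) x'"
  shows "is_proj z (D1 P \<inter> D2 \<alpha>)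
           (if x' = 0 then x' else min 1 (sqrt P / norm x') *\<^sub>R x')"
proof -
  define s where "s = norm x'"
  define c where "c = inner z x'"
  have x'D: "x' \<in> D2 \<alpha>" and opt: "\<And>w. w \<in> D2 \<alpha> \<Longrightarrow> norm (z - x') \<le> norm (z - w)"
    using assms(4) by (auto simp: is_proj_def)
  have opt2: "s\<^sup>2 - 2 * c \<le> (norm w)\<^sup>2 - 2 * inner z w" if "w \<in> D2 \<alpha>" for w
  proof -
    have "(norm (z - x'))\<^sup>2 \<le> (norm (z - w))\<^sup>2" using opt[OF that] by (simp add: power_mono)
    then show ?thesis unfolding normdiff s_def c_def by simp
  qed
  have s0: "s \<ge> 0" by (simp add: s_def)
  have cs: "c = s\<^sup>2"
  proof (cases "s = 0")
    case True then have "x' = 0" by (simp add: s_def)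
    then show ?thesis using True by (simp add: c_def)
  next
    case False
    then have sp: "s > 0" using s0 by simp
    show ?thesis
    proof (cases "c \<ge> 0")
      case True
      define t where "t = c / s\<^sup>2"
      have "s\<^sup>2 - 2 * c \<le> (norm (t *\<^sub>R x'))\<^sup>2 - 2 * inner z (t *\<^sub>R x')"
        using opt2[OF D2_scale[OF x'D]] by blast
      also have "\<dots> = t\<^sup>2 * s\<^sup>2 - 2 * t * c" by (simp add: s_def c_def power_mult_distrib)
      also have "\<dots> = - c\<^sup>2 / s\<^sup>2" using sp by (simp add: t_def field_simps power2_eq_square)
      finally have "s\<^sup>2 - 2 * c \<le> - c\<^sup>2 / s\<^sup>2" .
      then have "s\<^sup>2 * (s\<^sup>2 - 2 * c) \<le> - c\<^sup>2" using sp by (simp add: field_simps)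
      then have "(s\<^sup>2 - c)\<^sup>2 \<le> 0" by (simp add: power2_eq_square algebra_simps)
      then show ?thesis by simp
    next
      case False
      have "s\<^sup>2 - 2 * c \<le> (norm ((0::real) *\<^sub>R x'))\<^sup>2 - 2 * inner z ((0::real) *\<^sub>R x')"
        using opt2[OF D2_scale[OF x'D]] by blast
      then have "s\<^sup>2 - 2 * c \<le> 0" by simp
      then show ?thesis using False sp by (smt (verit) zero_less_power)
    qed
  qed
  have key: "inner z w \<le> norm w * s" if wD: "w \<in> D2 \<alpha>" for w
  proof (rule ccontr)
    assume nle: "\<not> ?thesis"
    define a where "a = inner z w"
    define r where "r = norm w"
    have ap: "a > 0" using nle s0 by (simp add: a_def) (smt (verit) norm_ge_zero mult_nonneg_nonneg)
    have rp: "r > 0"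
    proof -
      have "w \<noteq> 0" using ap by (auto simp: a_def)
      then show ?thesis by (simp add: r_def)
    qed
    define t where "t = a / r\<^sup>2"
    have "s\<^sup>2 - 2 * c \<le> (norm (t *\<^sub>R w))\<^sup>2 - 2 * inner z (t *\<^sub>R w)"
      using opt2[OF D2_scale[OF wD]] by blast
    also have "\<dots> = t\<^sup>2 * r\<^sup>2 - 2 * t * a" by (simp add: r_def a_def power_mult_distrib)
    also have "\<dots> = - a\<^sup>2 / r\<^sup>2" using rp by (simp add: t_def field_simps power2_eq_square)
    finally have "- s\<^sup>2 \<le> - a\<^sup>2 / r\<^sup>2" using cs by simp
    then have "a\<^sup>2 \<le> s\<^sup>2 * r\<^sup>2" using rp by (simp add: field_simps)
    then have "a\<^sup>2 \<le> (s * r)\<^sup>2" by (simp add: power_mult_distrib)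
    moreover have "0 \<le> s * r" using s0 rp by simp
    ultimately have "a \<le> s * r" by (rule power2_le_imp_le)
    then show False using nle by (simp add: a_def r_def mult.commute)
  qed
  define lam where "lam = (if x' = 0 then 1 else min 1 (sqrt P / norm x'))"
  have xeq: "(if x' = 0 then x' else min 1 (sqrt P / norm x') *\<^sub>R x') = lam *\<^sub>R x'"
    by (simp add: lam_def)
  define \<rho> where "\<rho> = min s (sqrt P)"
  have lam0: "lam \<ge> 0" using assms(3) by (simp add: lam_def)
  have rho: "lam * s = \<rho>"
  proof (cases "x' = 0")
    case True then show ?thesis using assms(3) by (simp add: lam_def s_def \<rho>_def)
  next
    case False
    then have sp: "s > 0" by (simp add: s_def)
    have "min 1 (sqrt P / s) * s = min s (sqrt P)" using sp
      by (simp add: min_def field_simps)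
    then show ?thesis using False by (simp add: lam_def s_def \<rho>_def)
  qed
  have nx: "norm (lam *\<^sub>R x') = \<rho>" using rho lam0 by (simp add: s_def)
  have inD: "lam *\<^sub>R x' \<in> D1 P \<inter> D2 \<alpha>"
  proof -
    have "\<rho> \<le> sqrt P" "0 \<le> \<rho>" using s0 assms(3) by (auto simp: \<rho>_def)
    then have "\<rho>\<^sup>2 \<le> (sqrt P)\<^sup>2" by (intro power_mono)
    then have "\<rho>\<^sup>2 \<le> P" using assms(3) by simp
    then show ?thesis using nx D2_scale[OF x'D] by (simp add: D1_def)
  qed
  have dist: "(norm (z - lam *\<^sub>R x'))\<^sup>2 = (norm z)\<^sup>2 + \<rho>\<^sup>2 - 2 * \<rho> * s"
  proof -
    have "inner z (lam *\<^sub>R x') = lam * c" by (simp add: c_def)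
    also have "\<dots> = \<rho> * s" using cs rho by (simp add: power2_eq_square)
    finally show ?thesis unfolding normdiff nx by simp
  qed
  have "norm (z - lam *\<^sub>R x') \<le> norm (z - w)" if wD: "w \<in> D1 P \<inter> D2 \<alpha>" for w
  proof -
    define r where "r = norm w"
    have r0: "r \<ge> 0" by (simp add: r_def)
    have "r\<^sup>2 \<le> P" using wD by (simp add: D1_def r_def)
    then have rP: "r \<le> sqrt P" using r0 real_le_rsqrt by blast
    have a: "inner z w \<le> r * s" using key wD by (simp add: r_def)
    have "(\<rho> - s)\<^sup>2 \<le> (r - s)\<^sup>2"
    proof (cases "s \<le> sqrt P")
      case True then show ?thesis by (simp add: \<rho>_def)
    next
      case False
      then have "\<rho> = sqrt P" by (simp add: \<rho>_def)
      then have "\<bar>\<rho> - s\<bar> \<le> \<bar>r - s\<bar>" using False rP by simp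
      then show ?thesis by (metis abs_ge_zero power2_abs power_mono)
    qed
    then have "\<rho>\<^sup>2 - 2 * \<rho> * s \<le> r\<^sup>2 - 2 * (r * s)"
      by (simp add: power2_eq_square algebra_simps)
    also have "\<dots> \<le> r\<^sup>2 - 2 * inner z w" using a by simp
    finally have "(norm z)\<^sup>2 + \<rho>\<^sup>2 - 2 * \<rho> * s \<le> (norm z)\<^sup>2 + (norm w)\<^sup>2 - 2 * inner z w"
      by (simp add: r_def)
    then have "(norm (z - lam *\<^sub>R x'))\<^sup>2 \<le> (norm (z - w))\<^sup>2"
      by (simp only: dist normdiff[of z w])
    then show ?thesis by (simp add: power2_le_iff_abs_le)
  qed
  then show ?thesis unfolding xeq is_proj_def using inD by blast
qed

end
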